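(* Let $a,b$ be nonnegative integers and let $G$ be a finite $(a,b)$-valent group. Then either $G$ has trivial soluble radical (i.e. $G$ has no nontrivial soluble normal subgroup), or $G$ has a minimal normal subgroup $N$ which is elementary abelian (isomorphic to $\mathbb{Z}_p^d$ for some prime $p$ and $d\ge1$) such that $G/N$ is a sub-$(a,b)$-valent group.
   Context: An involution is an element of order $2$. A subset $S$ of a group $G$ is a Cayley set of $G$ if $1\notin S$, $S$ is inverse-closed, and $S$ generates $G$. On pairs of nonnegative integers define $(a',b')\preccurlyeq(a,b)$ if and only if $b'\le b$ and $a'\le a+(b-b')/2$. A Cayley set is $(a,b)$-valent if it consists of exactly $a$ involutions and $b$ non-involutions, and sub-$(a,b)$-valent if it consists of $a'$ involutions and $b'$ non-involutions with $(a',b')\preccurlyeq(a,b)$. A group is $(a,b)$-valent (resp. sub-$(a,b)$-valent) if it has an $(a,b)$-valent (resp. sub-$(a,b)$-valent) Cayley set. The soluble radical of $G$ is its largest soluble normal subgroup. (The paper phrases the second alternative as "$G$ is a direct elementary abelian extension of a sub-$(a,b)$-valent group", where an extension of $Q$ by $N$ with $G/N\cong Q$ is direct if $N$ is a minimal normal subgroup of $G$ and elementary abelian if $N$ is elementary abelian.) *)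

theory Defs
  imports "HOL-Algebra.Algebra"
begin

definition involution :: "('a, 'b) monoid_scheme \<Rightarrow> 'a \<Rightarrow> bool" where
  "involution G x \<longleftrightarrow> x \<in> carrier G \<and> x \<noteq> \<one>\<^bsub>G\<^esub> \<and> x \<otimes>\<^bsub>G\<^esub> x = \<one>\<^bsub>G\<^esub>"

definition cayley_set :: "('a, 'b) monoid_scheme \<Rightarrow> 'a set \<Rightarrow> bool" where
  "cayley_set G S \<longleftrightarrow> S \<subseteq> carrier G \<and> \<one>\<^bsub>G\<^esub> \<notin> S
     \<and> (\<forall>x\<in>S. inv\<^bsub>G\<^esub> x \<in> S) \<and> generate G S = carrier G"

definition valent_set :: "('a, 'b) monoid_scheme \<Rightarrow> nat \<Rightarrow> nat \<Rightarrow> 'a set \<Rightarrow> bool" where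
  "valent_set G a b S \<longleftrightarrow> cayley_set G S \<and> finite S
     \<and> card {x \<in> S. involution G x} = a \<and> card {x \<in> S. \<not> involution G x} = b"

definition prec_pair :: "nat \<times> nat \<Rightarrow> nat \<times> nat \<Rightarrow> bool" where
  "prec_pair p q \<longleftrightarrow> snd p \<le> snd q
     \<and> real (fst p) \<le> real (fst q) + (real (snd q) - real (snd p)) / 2"

definition valent_group :: "('a, 'b) monoid_scheme \<Rightarrow> nat \<Rightarrow> nat \<Rightarrow> bool" where
  "valent_group G a b \<longleftrightarrow> (\<exists>S. valent_set G a b S)"

definition sub_valent_group :: "('a, 'b) monoid_scheme \<Rightarrow> nat \<Rightarrow> nat \<Rightarrow> bool" where
  "sub_valent_group G a b \<longleftrightarrow>
     (\<exists>S a' b'. valent_set G a' b' S \<and> prec_pair (a', b') (a, b))"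

definition trivial_soluble_radical :: "('a, 'b) monoid_scheme \<Rightarrow> bool" where
  "trivial_soluble_radical G \<longleftrightarrow>
     (\<forall>N. N \<lhd> G \<and> solvable (G\<lparr>carrier := N\<rparr>) \<longrightarrow> N = {\<one>\<^bsub>G\<^esub>})"

definition minimal_normal :: "('a, 'b) monoid_scheme \<Rightarrow> 'a set \<Rightarrow> bool" where
  "minimal_normal G N \<longleftrightarrow> N \<lhd> G \<and> N \<noteq> {\<one>\<^bsub>G\<^esub>}
     \<and> (\<forall>M. M \<lhd> G \<and> M \<subseteq> N \<longrightarrow> M = {\<one>\<^bsub>G\<^esub>} \<or> M = N)"

text \<open>Elementary abelian: abelian of prime exponent p (for finite nontrivial N this is
  exactly N isomorphic to Z_p^d with d at least 1).\<close>
definition elementary_abelian :: "('a, 'b) monoid_scheme \<Rightarrow> 'a set \<Rightarrow> bool" where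
  "elementary_abelian G N \<longleftrightarrow> comm_group (G\<lparr>carrier := N\<rparr>)
     \<and> (\<exists>p::nat. Factorial_Ring.prime p \<and> (\<forall>x\<in>N. x [^]\<^bsub>G\<^esub> p = \<one>\<^bsub>G\<^esub>))"

end

theory Submission imports Defs begin
lemma quot_subvalent:
  fixes G (structure)
  assumes grp: "group G" and nN: "N \<lhd> G" and vs: "valent_set G a b S"
  shows "sub_valent_group (G Mod N) a b"
proof -
  interpret group G by (rule grp)
  interpret N: normal N G by (rule nN)
  define H where "H = G Mod N"
  define \<pi> where "\<pi> = (\<lambda>x. N #> x)"
  have gH: "group H" unfolding H_def by (rule N.factorgroup_is_group)
  interpret H: group H by (rule gH)
  have hom: "group_hom G H \<pi>"
    unfolding group_hom_def group_hom_axioms_def H_def \<pi>_def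
    using grp N.factorgroup_is_group N.r_coset_hom_Mod by blast
  interpret h: group_hom G H \<pi> by (rule hom)
  have cs: "cayley_set G S" and finS: "finite S"
    and ca: "card {x \<in> S. involution G x} = a" and cb: "card {x \<in> S. \<not> involution G x} = b"
    using vs unfolding valent_set_def by auto
  have Ssub: "S \<subseteq> carrier G" and one_nS: "\<one> \<notin> S" and invS: "\<And>x. x \<in> S \<Longrightarrow> inv x \<in> S"
    and genS: "generate G S = carrier G"
    using cs unfolding cayley_set_def by auto
  have carrH: "carrier H = \<pi> ` carrier G"
    unfolding H_def \<pi>_def by (rule carrier_FactGroup)
  have oneH: "\<one>\<^bsub>H\<^esub> = N" unfolding H_def by simp
  define T where "T = \<pi> ` S - {N}"
  have Tsub: "T \<subseteq> carrier H" using Ssub carrH T_def by auto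
  have finT: "finite T" using finS T_def by auto
  have invT: "\<forall>y\<in>T. inv\<^bsub>H\<^esub> y \<in> T"
  proof
    fix y assume y: "y \<in> T"
    then obtain x where x: "x \<in> S" "y = \<pi> x" "\<pi> x \<noteq> N" unfolding T_def by auto
    have xc: "x \<in> carrier G" using x Ssub by auto
    have e: "inv\<^bsub>H\<^esub> y = \<pi> (inv x)" using x xc by simp
    have "\<pi> (inv x) \<noteq> N"
    proof
      assume "\<pi> (inv x) = N"
      then have "inv\<^bsub>H\<^esub> y = \<one>\<^bsub>H\<^esub>" using e oneH by simp
      then have "y = \<one>\<^bsub>H\<^esub>" using y Tsub
        by (metis H.inv_inv H.inv_one subsetD)
      then show False using x oneH by simp
    qed
    then show "inv\<^bsub>H\<^esub> y \<in> T" using e invS[OF x(1)] T_def by auto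
  qed
  have genT: "generate H T = carrier H"
  proof
    show "generate H T \<subseteq> carrier H" using H.generate_in_carrier[OF Tsub] by blast
    have "generate H (\<pi> ` S) = carrier H"
      using h.generate_img[OF Ssub] genS carrH by simp
    moreover have "generate H (\<pi> ` S) \<subseteq> generate H T"
    proof (rule H.generate_subgroup_incl)
      show "subgroup (generate H T) H" by (rule H.generate_is_subgroup[OF Tsub])
      show "\<pi> ` S \<subseteq> generate H T"
      proof
        fix y assume "y \<in> \<pi> ` S"
        then show "y \<in> generate H T"
        proof (cases "y = N")
          case True then show ?thesis using generate.one[of H T] oneH by simp
        next
          case False then show ?thesis using \<open>y \<in> \<pi> ` S\<close> generate.incl[of y T H] T_def by auto
        qed
      qed
    qed
    ultimately show "carrier H \<subseteq> generate H T" by simp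
  qed
  have csT: "cayley_set H T"
    unfolding cayley_set_def using Tsub invT genT oneH T_def by auto
  define A where "A = {x \<in> S. involution G x}"
  define B where "B = {x \<in> S. \<not> involution G x}"
  define T1 where "T1 = {y \<in> T. involution H y}"
  define T2 where "T2 = {y \<in> T. \<not> involution H y}"
  have finA: "finite A" and finB: "finite B" using finS A_def B_def by auto
  have invol_img: "involution H (\<pi> x)" if "x \<in> A" "\<pi> x \<noteq> N" for x
  proof -
    have xc: "x \<in> carrier G" "x \<otimes> x = \<one>" using that A_def Ssub unfolding involution_def by auto
    have "\<pi> x \<otimes>\<^bsub>H\<^esub> \<pi> x = \<one>\<^bsub>H\<^esub>" using h.hom_mult[OF xc(1) xc(1)] xc by simp
    then show ?thesis unfolding involution_def using xc that oneH by auto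
  qed
  define P where "P = (\<lambda>y. {x \<in> B. \<pi> x = y})"
  define Y where "Y = T2 \<union> (T1 - \<pi> ` A)"
  have P1: "card (P y) \<ge> 1" if "y \<in> T2" for y
  proof -
    have yT: "y \<in> T" using that T2_def by auto
    then have "y \<in> \<pi> ` S" "y \<noteq> N" unfolding T_def by auto
    then obtain x where x: "x \<in> S" "y = \<pi> x" "\<pi> x \<noteq> N" by blast
    have "x \<in> B"
    proof (rule ccontr)
      assume "x \<notin> B" then have "x \<in> A" using x A_def B_def by auto
      then have "involution H y" using invol_img x by auto
      then show False using that T2_def by auto
    qed
    then have "x \<in> P y" using x P_def by auto
    moreover have "finite (P y)" using finB P_def by auto
    ultimately show ?thesis by (metis One_nat_def Suc_leI card_gt_0_iff empty_iff)
  qed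
  have P2: "card (P y) \<ge> 2" if "y \<in> T1 - \<pi> ` A" for y
  proof -
    have yT: "y \<in> T" using that T1_def by auto
    then have "y \<in> \<pi> ` S" "y \<noteq> N" unfolding T_def by auto
    then obtain x where x: "x \<in> S" "y = \<pi> x" "\<pi> x \<noteq> N" by blast
    have xc: "x \<in> carrier G" using x Ssub by auto
    have xB: "x \<in> B" using that x A_def B_def by auto
    have ix: "inv x \<in> S" using invS x by auto
    have xx: "x \<otimes> x \<noteq> \<one>" using xB xc one_nS x unfolding B_def involution_def by auto
    have ixB: "inv x \<in> B"
    proof -
      have "\<not> involution G (inv x)"
      proof
        assume "involution G (inv x)"
        then have "inv x \<otimes> inv x = \<one>" unfolding involution_def by auto
        then have "inv (x \<otimes> x) = \<one>" using xc by (simp add: inv_mult_group)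
        then show False using xx xc by (metis inv_one inv_inv m_closed)
      qed
      then show ?thesis using ix B_def by auto
    qed
    have yi: "y \<otimes>\<^bsub>H\<^esub> y = \<one>\<^bsub>H\<^esub>" "y \<in> carrier H" using that T1_def unfolding involution_def by auto
    have "inv\<^bsub>H\<^esub> y = y" using yi by (metis H.inv_equality)
    then have "\<pi> (inv x) = y" using xc x by simp
    then have "{x, inv x} \<subseteq> P y" using xB ixB x P_def by auto
    moreover have "x \<noteq> inv x"
    proof
      assume "x = inv x"
      then have "x \<otimes> x = \<one>" using xc by (metis r_inv)
      then show False using xx by simp
    qed
    moreover have "finite (P y)" using finB P_def by auto
    ultimately show ?thesis by (metis card_2_iff card_mono)
  qed
  have finY: "finite Y" using finT Y_def T1_def T2_def by auto
  have disjY: "T2 \<inter> (T1 - \<pi> ` A) = {}" using T1_def T2_def by auto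
  have "(\<Sum>y\<in>Y. card (P y)) = card (\<Union>(P ` Y))"
    by (rule card_UN_disjoint[symmetric]) (use finY finB P_def in auto)
  also have "\<dots> \<le> card B" by (rule card_mono[OF finB]) (auto simp: P_def)
  finally have sumB: "(\<Sum>y\<in>Y. card (P y)) \<le> card B" .
  have "(\<Sum>y\<in>Y. card (P y)) = (\<Sum>y\<in>T2. card (P y)) + (\<Sum>y\<in>T1 - \<pi> ` A. card (P y))"
    unfolding Y_def by (rule sum.union_disjoint) (use finY Y_def disjY in auto)
  moreover have "(\<Sum>y\<in>T2. card (P y)) \<ge> (\<Sum>y\<in>T2. 1)" by (rule sum_mono) (use P1 in auto)
  moreover have "(\<Sum>y\<in>T1 - \<pi> ` A. card (P y)) \<ge> (\<Sum>y\<in>T1 - \<pi> ` A. 2)" by (rule sum_mono) (use P2 in auto)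
  ultimately have k1: "card T2 + 2 * card (T1 - \<pi> ` A) \<le> card B" using sumB by simp
  have T1s: "T1 = (T1 \<inter> \<pi> ` A) \<union> (T1 - \<pi> ` A)" by blast
  have "card T1 \<le> card (T1 \<inter> \<pi> ` A) + card (T1 - \<pi> ` A)"
    by (subst T1s) (rule card_Un_le)
  moreover have "card (T1 \<inter> \<pi> ` A) \<le> card (\<pi> ` A)"
    by (rule card_mono[OF finite_imageI[OF finA]]) blast
  moreover have "card (\<pi> ` A) \<le> card A" by (rule card_image_le[OF finA])
  ultimately have k2: "2 * card T1 + card T2 \<le> 2 * card A + card B" using k1 by linarith
  have k3: "card T2 \<le> card B" using k1 by linarith
  have "valent_set H (card T1) (card T2) T"
    unfolding valent_set_def using csT finT T1_def T2_def by auto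
  moreover have "prec_pair (card T1, card T2) (a, b)"
  proof -
    have k2': "2 * card T1 + card T2 \<le> 2 * a + b" and k3': "card T2 \<le> b"
      using k2 k3 ca cb A_def B_def by auto
    have "real (2 * card T1 + card T2) \<le> real (2 * a + b)" using k2' by (simp only: of_nat_le_iff)
    then have "2 * real (card T1) + real (card T2) \<le> 2 * real a + real b" by simp
    then show ?thesis unfolding prec_pair_def using k3' by (simp add: field_simps)
  qed
  ultimately show ?thesis unfolding sub_valent_group_def H_def by blast
qed

lemma (in group) comm_from_commutator:
  assumes "x \<in> carrier G" "y \<in> carrier G" "x \<otimes> y \<otimes> inv x \<otimes> inv y = \<one>"
  shows "x \<otimes> y = y \<otimes> x"
proof -
  have "x \<otimes> y \<otimes> inv x \<otimes> inv y \<otimes> y \<otimes> x = y \<otimes> x" using assms by simp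
  moreover have "x \<otimes> y \<otimes> inv x \<otimes> inv y \<otimes> y \<otimes> x = x \<otimes> y"
    using assms(1,2) by (simp add: m_assoc)
  ultimately show ?thesis by simp
qed

lemma (in group) derived_iter_consistent:
  assumes "subgroup M G"
  shows "(derived G ^^ k) M = (derived (G\<lparr>carrier := M\<rparr>) ^^ k) M \<and> (derived G ^^ k) M \<subseteq> M"
proof (induction k)
  case 0 then show ?case by simp
next
  case (Suc k)
  then have sub: "(derived G ^^ k) M \<subseteq> M" by blast
  have "derived G ((derived G ^^ k) M) \<subseteq> M" using derived_incl[OF sub assms] .
  moreover have "derived (G\<lparr>carrier := M\<rparr>) ((derived G ^^ k) M) = derived G ((derived G ^^ k) M)"
    using derived_consistent[OF sub assms] .
  ultimately show ?case using Suc by simp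
qed

lemma (in group) conj_pow:
  assumes "g \<in> carrier G" "h \<in> carrier G"
  shows "(g \<otimes> h \<otimes> inv g) [^] (n::nat) = g \<otimes> h [^] n \<otimes> inv g"
proof (induction n)
  case 0 then show ?case using assms by simp
next
  case (Suc n)
  have "(g \<otimes> h \<otimes> inv g) [^] Suc n = (g \<otimes> h [^] n \<otimes> inv g) \<otimes> (g \<otimes> h \<otimes> inv g)"
    using Suc by simp
  also have "\<dots> = g \<otimes> (h [^] n \<otimes> h) \<otimes> inv g"
  proof -
    have c: "inv g \<otimes> (g \<otimes> w) = w" if "w \<in> carrier G" for w
      using that assms by (simp add: m_assoc[symmetric])
    show ?thesis using assms by (simp add: m_assoc c)
  qed
  also have "\<dots> = g \<otimes> h [^] Suc n \<otimes> inv g" by simp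
  finally show ?case .
qed

lemma elem_ab:
  fixes G (structure)
  assumes grp: "group G" and fin: "finite (carrier G)"
    and M0: "M0 \<lhd> G" and solv: "solvable (G\<lparr>carrier := M0\<rparr>)"
    and mn: "minimal_normal G N" and NM: "N \<subseteq> M0"
  shows "elementary_abelian G N"
proof -
  interpret group G by (rule grp)
  have nN: "N \<lhd> G" and Nne: "N \<noteq> {\<one>}"
    and minN: "\<And>M. M \<lhd> G \<Longrightarrow> M \<subseteq> N \<Longrightarrow> M = {\<one>} \<or> M = N"
    using mn unfolding minimal_normal_def by auto
  interpret N: normal N G by (rule nN)
  have subN: "subgroup N G" by (rule N.subgroup_axioms)
  have subM: "subgroup M0 G" using M0 normal_def by blast
  have gM: "group (G\<lparr>carrier := M0\<rparr>)" by (rule subgroup_imp_group[OF subM])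
  obtain n where n: "(derived (G\<lparr>carrier := M0\<rparr>) ^^ n) M0 = {\<one>}"
    using group.solvable_iff_trivial_derived_seq[OF gM] solv by auto
  have dM: "(derived G ^^ n) M0 = {\<one>}" using derived_iter_consistent[OF subM, of n] n by simp
  have dN: "derived G N \<noteq> N"
  proof
    assume eq: "derived G N = N"
    have "(derived G ^^ k) N = N" for k by (induction k) (use eq in auto)
    then have "N \<subseteq> {\<one>}" using mono_exp_of_derived[OF NM, of n] dM by simp
    then show False using Nne subN subgroup.one_closed by blast
  qed
  have "derived G N = {\<one>}"
    using minN[OF derived_is_normal[OF nN] derived_incl[OF order_refl subN]] dN by blast
  then have comm: "x \<otimes> y = y \<otimes> x" if "x \<in> N" "y \<in> N" for x y
  proof -
    have "x \<otimes> y \<otimes> inv x \<otimes> inv y \<in> derived G N"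
      unfolding derived_def using that by (intro generate.incl) blast
    then have "x \<otimes> y \<otimes> inv x \<otimes> inv y = \<one>" using \<open>derived G N = {\<one>}\<close> by simp
    then show ?thesis using comm_from_commutator that N.subset by blast
  qed
  have cg: "comm_group (G\<lparr>carrier := N\<rparr>)"
    using group.group_comm_groupI[OF subgroup_imp_group[OF subN]] comm by simp
  obtain x where x: "x \<in> N" "x \<noteq> \<one>" using Nne subN subgroup.one_closed by blast
  have xc: "x \<in> carrier G" using x N.subset by auto
  define m where "m = ord x"
  have m1: "m \<noteq> 1" using ord_eq_1[OF xc] x m_def by simp
  have m0: "m \<ge> 1" using ord_ge_1[OF fin xc] m_def by simp
  obtain p where p: "Factorial_Ring.prime p" "p dvd m" using m1 prime_factor_nat by blast
  obtain q where q: "m = p * q" using p by (auto elim: dvdE)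
  define y where "y = x [^] q"
  have "x [^] (k::nat) \<in> N" for k
    by (induction k) (use x subN subgroup.one_closed subgroup.m_closed in fastforce)+
  then have yN: "y \<in> N" unfolding y_def by blast
  have yp: "y [^] p = \<one>" unfolding y_def using xc q m_def
    by (simp add: nat_pow_pow mult.commute) (metis pow_ord_eq_1)
  have q0: "0 < q" using q m0 by (cases q) auto
  have qm: "q < m" using q p(1) q0 prime_gt_1_nat by (metis mult_less_cancel2 mult_1 )
  have y1: "y \<noteq> \<one>"
  proof
    assume "y = \<one>"
    then have "m dvd q" using pow_eq_id[OF xc] y_def m_def by simp
    then show False using qm q0 by (simp add: nat_dvd_not_less)
  qed
  define K where "K = {z \<in> N. z [^] p = \<one>}"
  have subK: "subgroup K G"
  proof
    show "K \<subseteq> carrier G" using K_def N.subset by auto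
    show "\<one> \<in> K" using K_def subN subgroup.one_closed by fastforce
    fix u v assume u: "u \<in> K" and v: "v \<in> K"
    then have uc: "u \<in> carrier G" "v \<in> carrier G" using K_def N.subset by auto
    have "(u \<otimes> v) [^] p = u [^] p \<otimes> v [^] p"
      using pow_mult_distrib[OF comm uc] u v K_def by auto
    then show "u \<otimes> v \<in> K" using u v K_def subN subgroup.m_closed by fastforce
    show "inv u \<in> K" using u uc K_def nat_pow_inv subN subgroup.m_inv_closed by fastforce
  qed
  have nK: "K \<lhd> G"
  proof (rule normal_invI[OF subK])
    fix g h assume g: "g \<in> carrier G" and h: "h \<in> K"
    then have hc: "h \<in> carrier G" "h \<in> N" "h [^] p = \<one>" using K_def N.subset by auto
    have "(g \<otimes> h \<otimes> inv g) [^] p = \<one>" using conj_pow[OF g hc(1)] hc g by simp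
    moreover have "g \<otimes> h \<otimes> inv g \<in> N" using N.inv_op_closed2[OF g hc(2)] .
    ultimately show "g \<otimes> h \<otimes> inv g \<in> K" using K_def by simp
  qed
  have "K \<noteq> {\<one>}" using yN yp y1 K_def by auto
  then have "K = N" using minN[OF nK] K_def by auto
  then have "\<forall>z\<in>N. z [^] p = \<one>" using K_def by auto
  then show ?thesis unfolding elementary_abelian_def using cg p(1) by blast
qed

theorem lemma3p2:
  fixes G (structure) and a b :: nat
  assumes "group G" and "finite (carrier G)" and "valent_group G a b"
  shows "trivial_soluble_radical G \<or>
    (\<exists>N. minimal_normal G N \<and> elementary_abelian G N \<and> sub_valent_group (G Mod N) a b)"
proof (cases "trivial_soluble_radical G")
  case True then show ?thesis by blast
next
  case False
  interpret group G by (rule assms(1))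
  obtain S where S: "valent_set G a b S" using assms(3) unfolding valent_group_def by blast
  obtain M0 where M0: "M0 \<lhd> G" "solvable (G\<lparr>carrier := M0\<rparr>)" "M0 \<noteq> {\<one>}"
    using False unfolding trivial_soluble_radical_def by blast
  define P where "P = (\<lambda>M. M \<lhd> G \<and> M \<subseteq> M0 \<and> M \<noteq> {\<one>})"
  have "P M0" using M0 P_def by simp
  then obtain N where N: "P N" and Nmin: "\<And>M. P M \<Longrightarrow> card N \<le> card M"
    using ex_has_least_nat[of P M0 card] by blast
  have finN: "finite N" using N P_def normal_imp_subgroup subgroup.subset assms(2)
    by (metis finite_subset)
  have mn: "minimal_normal G N"
    unfolding minimal_normal_def
  proof (intro conjI allI impI)
    show "N \<lhd> G" "N \<noteq> {\<one>}" using N P_def by auto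
    fix M assume M: "M \<lhd> G \<and> M \<subseteq> N"
    show "M = {\<one>} \<or> M = N"
    proof (cases "M = {\<one>}")
      case True then show ?thesis by simp
    next
      case False
      then have "P M" using M N P_def by auto
      then have "card N \<le> card M" by (rule Nmin)
      then show ?thesis using card_seteq[OF finN] M by blast
    qed
  qed
  have "elementary_abelian G N"
    using elem_ab[OF assms(1,2) M0(1,2) mn] N P_def by blast
  moreover have "sub_valent_group (G Mod N) a b"
    using quot_subvalent[OF assms(1) _ S] N P_def by blast
  ultimately show ?thesis using mn by blast
qed

end
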